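(* Let $G=(V,E)$ be a connected simple graph and $\pi:V\to\mathbb{N}$ an injection. For a spanning tree $T$ of $G$ define $w(T)=\sum_{uv\in E(T)}\min(\pi(u),\pi(v))$. If $T^*$ is a spanning tree of $G$ minimizing $w$, then for every edge $uv\in E(T^* )$ with $\pi(u)<\pi(v)$, the pair $(u,v)$ is good with respect to $\pi$; that is, $\pi(u)<\pi(a)$ for every common neighbour $a\in N(u)\cap N(v)$.
   Context: For a vertex $u$, $N(u)=\{v\in V: uv\in E\}$ is its open neighbourhood. Given an injection $\pi:V\to\mathbb{N}$, an ordered pair $(u,v)\in V^2$ is called good with respect to $\pi$ if $uv\in E$, $\pi(u)<\pi(v)$, and $\pi(u)<\pi(w)$ for every $w\in N(u)\cap N(v)$. *)

theory Defs
  imports Main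
begin

definition simple_graph :: "'a set \<Rightarrow> 'a set set \<Rightarrow> bool" where
  "simple_graph V E \<longleftrightarrow> finite V \<and> (\<forall>e\<in>E. \<exists>u v. e = {u, v} \<and> u \<noteq> v \<and> u \<in> V \<and> v \<in> V)"

definition walk :: "'a set set \<Rightarrow> 'a list \<Rightarrow> bool" where
  "walk E p \<longleftrightarrow> p \<noteq> [] \<and> (\<forall>i. Suc i < length p \<longrightarrow> {p ! i, p ! Suc i} \<in> E)"

definition connected_graph :: "'a set \<Rightarrow> 'a set set \<Rightarrow> bool" where
  "connected_graph V E \<longleftrightarrow> V \<noteq> {} \<and>
     (\<forall>u\<in>V. \<forall>v\<in>V. \<exists>p. walk E p \<and> set p \<subseteq> V \<and> hd p = u \<and> last p = v)"

definition has_cycle :: "'a set set \<Rightarrow> bool" where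
  "has_cycle E \<longleftrightarrow> (\<exists>p. walk E p \<and> length p \<ge> 3 \<and> distinct p \<and> {last p, hd p} \<in> E)"

definition spanning_tree :: "'a set \<Rightarrow> 'a set set \<Rightarrow> 'a set set \<Rightarrow> bool" where
  "spanning_tree V E T \<longleftrightarrow> T \<subseteq> E \<and> connected_graph V T \<and> \<not> has_cycle T"

definition nbhd :: "'a set set \<Rightarrow> 'a \<Rightarrow> 'a set" where
  "nbhd E u = {v. {u, v} \<in> E}"

definition tree_weight :: "('a \<Rightarrow> nat) \<Rightarrow> 'a set set \<Rightarrow> nat" where
  "tree_weight \<pi> T = (\<Sum>e\<in>T. Min (\<pi> ` e))"

definition good_pair :: "'a set set \<Rightarrow> ('a \<Rightarrow> nat) \<Rightarrow> 'a \<Rightarrow> 'a \<Rightarrow> bool" where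
  "good_pair E \<pi> u v \<longleftrightarrow> {u, v} \<in> E \<and> \<pi> u < \<pi> v \<and>
     (\<forall>w\<in>nbhd E u \<inter> nbhd E v. \<pi> u < \<pi> w)"

end

theory Submission
  imports Defs
begin

definition conn :: "'a set set \<Rightarrow> 'a \<Rightarrow> 'a \<Rightarrow> bool" where
  "conn F a b \<longleftrightarrow> (\<exists>p. walk F p \<and> hd p = a \<and> last p = b)"

lemma walk_single: "walk F [a]"
  by (simp add: walk_def)

lemma walk_Cons2: "walk F (a#b#zs) \<longleftrightarrow> {a,b} \<in> F \<and> walk F (b#zs)"
proof
  assume h: "walk F (a#b#zs)"
  have "{(a#b#zs) ! 0, (a#b#zs) ! Suc 0} \<in> F" using h unfolding walk_def
    by (metis (no_types) length_Cons Suc_less_eq zero_less_Suc)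
  then have "{a,b} \<in> F" by simp
  moreover have "walk F (b#zs)" unfolding walk_def
  proof (intro conjI allI impI)
    fix i assume "Suc i < length (b#zs)"
    then have "Suc (Suc i) < length (a#b#zs)" by simp
    then have "{(a#b#zs) ! Suc i, (a#b#zs) ! Suc (Suc i)} \<in> F" using h unfolding walk_def by blast
    then show "{(b # zs) ! i, (b # zs) ! Suc i} \<in> F" by simp
  qed simp
  ultimately show "{a,b} \<in> F \<and> walk F (b#zs)" by blast
next
  assume h: "{a,b} \<in> F \<and> walk F (b#zs)"
  show "walk F (a#b#zs)" unfolding walk_def
  proof (intro conjI allI impI)
    fix i assume i: "Suc i < length (a#b#zs)"
    show "{(a#b#zs) ! i, (a#b#zs) ! Suc i} \<in> F"
    proof (cases i)
      case 0 then show ?thesis using h by simp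
    next
      case (Suc j)
      then have "Suc j < length (b#zs)" using i by simp
      then have "{(b#zs) ! j, (b#zs) ! Suc j} \<in> F" using h unfolding walk_def by blast
      then show ?thesis using Suc by simp
    qed
  qed simp
qed

lemma walk_join: "walk F (xs @ [y]) \<Longrightarrow> walk F (y # zs) \<Longrightarrow> walk F (xs @ y # zs)"
proof (induction xs)
  case Nil then show ?case by simp
next
  case (Cons a xs)
  show ?case
  proof (cases xs)
    case Nil
    then show ?thesis using Cons.prems by (simp add: walk_Cons2)
  next
    case (Cons b r)
    then show ?thesis using Cons.prems Cons.IH by (simp add: walk_Cons2)
  qed
qed

lemma walk_prefix: "walk F (xs @ ys) \<Longrightarrow> xs \<noteq> [] \<Longrightarrow> walk F xs"
  unfolding walk_def
proof (intro conjI allI impI)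
  fix i assume h: "xs @ ys \<noteq> [] \<and> (\<forall>i. Suc i < length (xs @ ys) \<longrightarrow> {(xs @ ys) ! i, (xs @ ys) ! Suc i} \<in> F)"
    and i: "Suc i < length xs"
  then have "Suc i < length (xs @ ys)" by simp
  then have "{(xs @ ys) ! i, (xs @ ys) ! Suc i} \<in> F" using h by blast
  then show "{xs ! i, xs ! Suc i} \<in> F" using i by (simp add: nth_append)
qed auto

lemma walk_suffix: "walk F (xs @ ys) \<Longrightarrow> ys \<noteq> [] \<Longrightarrow> walk F ys"
  unfolding walk_def
proof (intro conjI allI impI)
  fix i assume h: "xs @ ys \<noteq> [] \<and> (\<forall>i. Suc i < length (xs @ ys) \<longrightarrow> {(xs @ ys) ! i, (xs @ ys) ! Suc i} \<in> F)"
    and "Suc i < length ys"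
  then have "Suc (length xs + i) < length (xs @ ys)" by simp
  then have "{(xs @ ys) ! (length xs + i), (xs @ ys) ! Suc (length xs + i)} \<in> F" using h by blast
  then show "{ys ! i, ys ! Suc i} \<in> F" by (simp add: nth_append)
qed auto

lemma walk_mono: "walk F p \<Longrightarrow> F \<subseteq> G \<Longrightarrow> walk G p"
  unfolding walk_def by blast

lemma walk_rev: "walk F p \<Longrightarrow> walk F (rev p)"
  unfolding walk_def
proof (intro conjI allI impI)
  fix i assume h: "p \<noteq> [] \<and> (\<forall>i. Suc i < length p \<longrightarrow> {p ! i, p ! Suc i} \<in> F)"
    and i: "Suc i < length (rev p)"
  define j where "j = length p - Suc (Suc i)"
  have "Suc j < length p" using i j_def by simp
  then have "{p ! j, p ! Suc j} \<in> F" using h by blast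
  moreover have "rev p ! i = p ! Suc j" using i j_def by (simp add: rev_nth Suc_diff_Suc)
  moreover have "rev p ! Suc i = p ! j" using i j_def by (simp add: rev_nth)
  ultimately show "{rev p ! i, rev p ! Suc i} \<in> F" by (simp add: insert_commute)
qed auto

lemma conn_refl: "conn F a a"
  unfolding conn_def using walk_single by fastforce

lemma conn_sym: "conn F a b \<Longrightarrow> conn F b a"
  unfolding conn_def using walk_rev
  by (metis hd_rev last_rev)

lemma conn_edge: "{a,b} \<in> F \<Longrightarrow> conn F a b"
  unfolding conn_def
  by (rule exI[of _ "[a,b]"]) (simp add: walk_Cons2 walk_single)

lemma conn_mono: "conn F a b \<Longrightarrow> F \<subseteq> G \<Longrightarrow> conn G a b"
  unfolding conn_def using walk_mono by blast

lemma conn_trans: assumes "conn F a b" "conn F b c" shows "conn F a c"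
proof -
  obtain p where p: "walk F p" "hd p = a" "last p = b" using assms(1) conn_def by metis
  obtain q where q: "walk F q" "hd q = b" "last q = c" using assms(2) conn_def by metis
  have pne: "p \<noteq> []" and qne: "q \<noteq> []" using p q walk_def by auto
  have pe: "p = butlast p @ [b]" using pne p(3) append_butlast_last_id by metis
  have qe: "q = b # tl q" using qne q by (metis list.collapse)
  have w: "walk F (butlast p @ b # tl q)"
    using walk_join[of F "butlast p" b "tl q"] p q pe qe by metis
  have "hd (butlast p @ b # tl q) = a"
    using p pe by (metis append_Cons append_Nil hd_append2 list.sel(1) self_append_conv2)
  moreover have "last (butlast p @ b # tl q) = c"
    using q qe by (metis last_appendR list.distinct(1))
  ultimately show ?thesis unfolding conn_def using w by blast
qed

lemma walk_len2: "walk F p \<Longrightarrow> length p = 2 \<Longrightarrow> {hd p, last p} \<in> F"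
  unfolding walk_def
  by (metis One_nat_def Suc_1 hd_conv_nth last_conv_nth lessI list.size(3) zero_neq_numeral diff_Suc_1)

lemma conn_cycle:
  assumes "x \<noteq> y" "conn F x y" "{x,y} \<notin> F"
  shows "has_cycle (insert {x,y} F)"
proof -
  let ?P = "\<lambda>n. \<exists>p. walk F p \<and> hd p = x \<and> last p = y \<and> length p = n"
  have ex: "\<exists>n. ?P n" using assms(2) conn_def by metis
  obtain n where n: "?P n" and min: "\<And>m. m < n \<Longrightarrow> \<not> ?P m"
    using ex exists_least_iff[of ?P] by blast
  obtain p where p: "walk F p" "hd p = x" "last p = y" "length p = n" using n by blast
  have pne: "p \<noteq> []" using p walk_def by auto
  have dist: "distinct p"
  proof (rule ccontr)
    assume "\<not> distinct p"
    then obtain as c bs cs where pe: "p = as @ [c] @ bs @ [c] @ cs"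
      using not_distinct_decomp by blast
    have w1: "walk F (as @ [c])" using p(1) pe walk_prefix[of F "as @ [c]" "bs @ [c] @ cs"] by simp
    have w2: "walk F (c # cs)" using p(1) pe walk_suffix[of F "as @ [c] @ bs" "c # cs"] by simp
    have w: "walk F (as @ c # cs)" using walk_join[OF w1 w2] .
    have "hd (as @ c # cs) = x" using p(2) pe by (cases as) auto
    moreover have "last (as @ c # cs) = y" using p(3) pe by (cases cs) auto
    moreover have "length (as @ c # cs) < n" using p(4) pe by simp
    ultimately show False using min w by blast
  qed
  have "length p \<noteq> 1" using p assms(1) by (metis One_nat_def hd_conv_nth last_conv_nth diff_Suc_1 pne)
  moreover have "length p \<noteq> 2" using walk_len2[OF p(1)] p assms(3) by auto
  moreover have "length p \<noteq> 0" using pne by simp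
  ultimately have "length p \<ge> 3" by linarith
  moreover have "walk (insert {x,y} F) p" using walk_mono p(1) by blast
  moreover have "{last p, hd p} \<in> insert {x,y} F" using p by (simp add: insert_commute)
  ultimately show ?thesis unfolding has_cycle_def using dist by blast
qed

lemma cycle_mono: "has_cycle F \<Longrightarrow> F \<subseteq> G \<Longrightarrow> has_cycle G"
  unfolding has_cycle_def using walk_mono by blast

lemma cycle_conn:
  assumes "has_cycle (insert {x,y} F)" "\<not> has_cycle F"
  shows "conn F x y"
proof -
  let ?e = "{x,y}"
  obtain p where p: "walk (insert ?e F) p" "length p \<ge> 3" "distinct p" "{last p, hd p} \<in> insert ?e F"
    using assms(1) has_cycle_def by metis
  define n where "n = length p"
  show ?thesis
  proof (cases "walk F p")
    case True
    then have "{last p, hd p} \<notin> F" using assms(2) p unfolding has_cycle_def by blast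
    then have "{last p, hd p} = ?e" using p(4) by blast
    then have "(last p = x \<and> hd p = y) \<or> (last p = y \<and> hd p = x)" by (simp add: doubleton_eq_iff)
    moreover have "conn F (hd p) (last p)" unfolding conn_def using True by blast
    ultimately show ?thesis using conn_sym[of F "hd p" "last p"] by auto
  next
    case False
    then obtain i where i: "Suc i < n" "{p ! i, p ! Suc i} \<notin> F"
      using p(1) unfolding walk_def n_def by blast
    have inj: "a = b" if "a < n" "b < n" "p ! a = p ! b" for a b
      using p(3) that nth_eq_iff_index_eq unfolding n_def by metis
    have ei: "{p ! i, p ! Suc i} = ?e" using p(1) i unfolding walk_def n_def by blast
    have other: "{p ! j, p ! Suc j} \<in> F" if j: "Suc j < n" "j \<noteq> i" for j
    proof (rule ccontr)
      assume "{p ! j, p ! Suc j} \<notin> F"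
      then have "{p ! j, p ! Suc j} = {p ! i, p ! Suc i}" using p(1) j ei unfolding walk_def n_def by blast
      then have "(p!j = p!i \<and> p!Suc j = p!Suc i) \<or> (p!j = p!Suc i \<and> p!Suc j = p!i)"
        by (simp add: doubleton_eq_iff)
      then have "(j = i) \<or> (j = Suc i \<and> Suc j = i)"
        using inj i j Suc_lessD by metis
      then show False using j by auto
    qed
    have n3: "n \<ge> 3" using p(2) n_def by simp
    have lastp: "last p = p ! (n - 1)" and hdp: "hd p = p ! 0"
    proof -
      have "p \<noteq> []" using n3 n_def by auto
      then show "last p = p ! (n - 1)" "hd p = p ! 0" using n_def by (simp_all add: last_conv_nth hd_conv_nth)
    qed
    have closeF: "{last p, hd p} \<in> F"
    proof (rule ccontr)
      assume "{last p, hd p} \<notin> F"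
      then have "{p!(n-1), p!0} = {p ! i, p ! Suc i}" using p(4) ei lastp hdp by simp
      then have "(p!(n-1) = p!i \<and> p!0 = p!Suc i) \<or> (p!(n-1) = p!Suc i \<and> p!0 = p!i)"
        by (simp add: doubleton_eq_iff)
      moreover have "n - 1 < n" "0 < n" "i < n" using n3 i by auto
      ultimately have "(n - 1 = i \<and> 0 = Suc i) \<or> (n - 1 = Suc i \<and> 0 = i)"
        using inj i by metis
      then show False using n3 by auto
    qed
    define A where "A = drop (Suc i) p"
    define B where "B = take (Suc i) p"
    have wA: "walk F A" unfolding walk_def A_def
    proof (intro conjI allI impI)
      show "drop (Suc i) p \<noteq> []" using i n_def by simp
      fix j assume "Suc j < length (drop (Suc i) p)"
      then have "Suc (Suc i + j) < n" "Suc i + j \<noteq> i" using n_def by auto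
      then have "{p ! (Suc i + j), p ! Suc (Suc i + j)} \<in> F" using other by blast
      then show "{drop (Suc i) p ! j, drop (Suc i) p ! Suc j} \<in> F" using i n_def by simp
    qed
    have wB: "walk F B" unfolding walk_def B_def
    proof (intro conjI allI impI)
      show "take (Suc i) p \<noteq> []" using i n_def by (cases p) auto
      fix j assume "Suc j < length (take (Suc i) p)"
      then have "Suc j < n" "j \<noteq> i" using n_def by auto
      then have "{p ! j, p ! Suc j} \<in> F" using other by blast
      then show "{take (Suc i) p ! j, take (Suc i) p ! Suc j} \<in> F"
        using \<open>Suc j < length (take (Suc i) p)\<close> by simp
    qed
    have lA: "last A = last p" using i n_def A_def by simp
    have hA: "hd A = p ! Suc i" using i n_def A_def by (simp add: hd_drop_conv_nth)
    have hB: "hd B = hd p" using i n_def B_def by simp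
    have lB: "last B = p ! i" using i n_def B_def by (simp add: take_Suc_conv_app_nth)
    have c1: "conn F (p ! Suc i) (last p)" unfolding conn_def using wA lA hA by blast
    have c2: "conn F (last p) (hd p)" by (rule conn_edge[OF closeF])
    have c3: "conn F (hd p) (p ! i)" unfolding conn_def using wB hB lB by blast
    have c: "conn F (p ! Suc i) (p ! i)" using conn_trans[OF conn_trans[OF c1 c2] c3] .
    have "(p ! i = x \<and> p ! Suc i = y) \<or> (p ! i = y \<and> p ! Suc i = x)" using ei by (simp add: doubleton_eq_iff)
    then show ?thesis using c conn_sym[of F "p ! Suc i" "p ! i"] by auto
  qed
qed

lemma first_hit:
  "walk F p \<Longrightarrow> last p \<in> {x,y} \<Longrightarrow>
     conn (F - {{x,y}}) (hd p) x \<or> conn (F - {{x,y}}) (hd p) y"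
proof (induction p)
  case Nil then show ?case by (simp add: walk_def)
next
  case (Cons a rest)
  show ?case
  proof (cases "a \<in> {x,y}")
    case True then show ?thesis using conn_refl[of "F - {{x,y}}" a] by (simp only: list.sel(1)) blast
  next
    case False
    show ?thesis
    proof (cases rest)
      case Nil then show ?thesis using Cons.prems False by simp
    next
      case (Cons b r)
      have e: "{a,b} \<in> F" and w: "walk F rest" using Cons.prems(1) Cons by (auto simp: walk_Cons2)
      have "{a,b} \<noteq> {x,y}" using False by auto
      then have "{a,b} \<in> F - {{x,y}}" using e by blast
      then have c1: "conn (F - {{x,y}}) a b" by (rule conn_edge)
      have "last rest \<in> {x,y}" using Cons.prems(2) Cons by simp
      then have "conn (F - {{x,y}}) b x \<or> conn (F - {{x,y}}) b y" using Cons.IH w Cons by simp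
      then show ?thesis using conn_trans[OF c1, of x] conn_trans[OF c1, of y] by (simp only: list.sel(1)) blast
    qed
  qed
qed

lemma edge_V:
  assumes "simple_graph V E" "{a,b} \<in> E"
  shows "a \<in> V \<and> b \<in> V \<and> a \<noteq> b"
proof -
  obtain u v where uv: "{a,b} = {u,v}" "u \<noteq> v" "u \<in> V" "v \<in> V"
    using assms unfolding simple_graph_def by blast
  then have "(a = u \<and> b = v) \<or> (a = v \<and> b = u)" by (simp add: doubleton_eq_iff)
  then show ?thesis using uv by auto
qed

lemma walk_in_V:
  assumes "simple_graph V E" "F \<subseteq> E" "walk F p" "hd p \<in> V"
  shows "set p \<subseteq> V"
proof
  fix z assume "z \<in> set p"
  then obtain i where i: "i < length p" "z = p ! i" by (metis in_set_conv_nth)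
  show "z \<in> V"
  proof (cases i)
    case 0 then show ?thesis using i assms(4) by (metis hd_conv_nth list.size(3) not_less0)
  next
    case (Suc j)
    then have "{p ! j, p ! i} \<in> E" using assms(2,3) i unfolding walk_def by blast
    then show ?thesis using edge_V[OF assms(1)] i by blast
  qed
qed

lemma swap_tree:
  assumes sg: "simple_graph V E" and st: "spanning_tree V E T"
    and xy: "{x,y} \<in> T" and wy: "conn (T - {{x,y}}) w y" and xw: "{x,w} \<in> E"
  shows "spanning_tree V E (insert {x,w} (T - {{x,y}})) \<and> {x,w} \<notin> T - {{x,y}}"
proof -
  let ?T0 = "T - {{x,y}}"
  let ?T' = "insert {x,w} ?T0"
  have TE: "T \<subseteq> E" and conT: "connected_graph V T" and acT: "\<not> has_cycle T"
    using st unfolding spanning_tree_def by auto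
  have xyE: "{x,y} \<in> E" using xy TE by blast
  have xney: "x \<noteq> y" and xV: "x \<in> V" using edge_V[OF sg xyE] by auto
  have ac0: "\<not> has_cycle ?T0" using acT cycle_mono by blast
  have ncon: "\<not> conn ?T0 x w"
  proof
    assume "conn ?T0 x w"
    then have "conn ?T0 x y" using wy by (rule conn_trans)
    moreover have "{x,y} \<notin> ?T0" by blast
    ultimately have "has_cycle (insert {x,y} ?T0)" using conn_cycle[OF xney] by blast
    moreover have "insert {x,y} ?T0 = T" using xy by blast
    ultimately show False using acT by simp
  qed
  have notin: "{x,w} \<notin> ?T0" using ncon conn_edge[of x w ?T0] by blast
  have ac': "\<not> has_cycle ?T'" using cycle_conn[of x w ?T0] ac0 ncon by blast
  have allx: "conn ?T' a x" if a: "a \<in> V" for a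
  proof -
    obtain p where p: "walk T p" "hd p = a" "last p = x"
      using conT a xV unfolding connected_graph_def by blast
    have "conn ?T0 a x \<or> conn ?T0 a y" using first_hit[OF p(1)] p by simp
    moreover have "conn ?T' y x"
    proof -
      have "conn ?T' y w" using conn_mono[OF conn_sym[OF wy]] by blast
      moreover have "{w,x} \<in> ?T'" by (simp add: insert_commute)
      then have "conn ?T' w x" by (rule conn_edge)
      ultimately show ?thesis by (rule conn_trans)
    qed
    moreover have sub: "?T0 \<subseteq> ?T'" by blast
    ultimately show ?thesis using conn_mono[OF _ sub, of a x] conn_mono[OF _ sub, of a y] conn_trans[of ?T' a y x] by blast
  qed
  have T'E: "?T' \<subseteq> E" using TE xw by blast
  have "connected_graph V ?T'" unfolding connected_graph_def
  proof (intro conjI ballI)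
    show "V \<noteq> {}" using conT unfolding connected_graph_def by blast
    fix a b assume a: "a \<in> V" and b: "b \<in> V"
    have "conn ?T' a b" using conn_trans[OF allx[OF a] conn_sym[OF allx[OF b]]] .
    then obtain p where p: "walk ?T' p" "hd p = a" "last p = b" unfolding conn_def by blast
    moreover have "set p \<subseteq> V" using walk_in_V[OF sg T'E p(1)] p a by simp
    ultimately show "\<exists>p. walk ?T' p \<and> set p \<subseteq> V \<and> hd p = a \<and> last p = b" by blast
  qed
  then show ?thesis using T'E ac' notin unfolding spanning_tree_def by blast
qed

theorem mainTheorem4:
  fixes V :: "'a set" and E :: "'a set set" and \<pi> :: "'a \<Rightarrow> nat" and Tstar :: "'a set set"
  assumes "simple_graph V E"
    and "connected_graph V E"
    and "inj_on \<pi> V"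
    and "spanning_tree V E Tstar"
    and "\<And>T. spanning_tree V E T \<Longrightarrow> tree_weight \<pi> Tstar \<le> tree_weight \<pi> T"
    and "{u, v} \<in> Tstar"
    and "\<pi> u < \<pi> v"
  shows "good_pair E \<pi> u v"
proof -
  have TE: "Tstar \<subseteq> E" and conT: "connected_graph V Tstar"
    using assms(4) unfolding spanning_tree_def by auto
  have finV: "finite V" using assms(1) unfolding simple_graph_def by blast
  have "E \<subseteq> Pow V"
  proof
    fix e assume "e \<in> E"
    then obtain a b where "e = {a,b}" "a \<in> V" "b \<in> V"
      using assms(1) unfolding simple_graph_def by meson
    then show "e \<in> Pow V" by simp
  qed
  then have finE: "finite E" using finV finite_subset by blast
  then have finT: "finite Tstar" using TE finite_subset by blast
  have uvE: "{u,v} \<in> E" using TE assms(6) by blast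
  have uV: "u \<in> V" and vV: "v \<in> V" using edge_V[OF assms(1) uvE] by auto
  have "\<pi> u < \<pi> w" if w: "w \<in> nbhd E u \<inter> nbhd E v" for w
  proof (rule ccontr)
    assume "\<not> \<pi> u < \<pi> w"
    have uw: "{u,w} \<in> E" and vw: "{v,w} \<in> E" using w unfolding nbhd_def by auto
    have wV: "w \<in> V" and "w \<noteq> u" using edge_V[OF assms(1) uw] by auto
    then have "\<pi> w \<noteq> \<pi> u" using assms(3) wV uV unfolding inj_on_def by blast
    then have wu: "\<pi> w < \<pi> u" using \<open>\<not> \<pi> u < \<pi> w\<close> by simp
    obtain p where p: "walk Tstar p" "hd p = w" "last p = u"
      using conT wV uV unfolding connected_graph_def by blast
    have "conn (Tstar - {{u,v}}) w u \<or> conn (Tstar - {{u,v}}) w v"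
      using first_hit[OF p(1)] p by simp
    moreover have "{v,u} = {u,v}" by (rule insert_commute)
    ultimately obtain x y where xy: "{x,y} = {u,v}" "conn (Tstar - {{x,y}}) w y" "{x,w} \<in> E"
      using uw vw by (elim disjE) auto
    have xyT: "{x,y} \<in> Tstar" using xy assms(6) by simp
    let ?T' = "insert {x,w} (Tstar - {{x,y}})"
    have sw: "spanning_tree V E ?T'" "{x,w} \<notin> Tstar - {{x,y}}"
      using swap_tree[OF assms(1,4) xyT xy(2,3)] by auto
    have xin: "x = u \<or> x = v" using xy(1) by (simp add: doubleton_eq_iff) blast
    have m1: "Min (\<pi> ` {x,w}) = \<pi> w" using xin wu assms(7) by auto
    have m2: "Min (\<pi> ` {x,y}) = \<pi> u" using xy(1) assms(7) by auto
    have fin0: "finite (Tstar - {{x,y}})" using finT by simp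
    have "tree_weight \<pi> ?T' = Min (\<pi> ` {x,w}) + tree_weight \<pi> (Tstar - {{x,y}})"
      unfolding tree_weight_def by (rule sum.insert[OF fin0 sw(2)])
    moreover have "tree_weight \<pi> Tstar = Min (\<pi> ` {x,y}) + tree_weight \<pi> (Tstar - {{x,y}})"
      unfolding tree_weight_def by (rule sum.remove[OF finT xyT])
    ultimately have "tree_weight \<pi> ?T' < tree_weight \<pi> Tstar" using m1 m2 wu by simp
    then show False using assms(5)[OF sw(1)] by simp
  qed
  then show ?thesis unfolding good_pair_def using uvE assms(7) by blast
qed

end
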